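(* There exists a constant $C>0$ depending only on $n$ such that the following holds. Let $B_r\subseteq\mathbb{R}^n$ be a ball of radius $r$, $V\subseteq\mathbb{R}^n$ a linear subspace and $Z$ a transverse complete intersection with $\dim Z+\dim V\ge n$, such that for every $z\in Z\cap 2B_r$ the pair $T_zZ, V$ is quantitatively transverse. Then \[ V\cap B_r\cap N_\rho(Z)\subseteq N_{C\rho}(V\cap Z) \] for all $0<\rho\le c\,r$, where $c>0$ is a sufficiently small constant depending only on $n$.
   Context: A transverse complete intersection is $Z=Z(P_1,\dots,P_{n-m})=\{x\in\mathbb{R}^n:P_j(x)=0,\ 1\le j\le n-m\}$ for real polynomials $P_j$ such that $(\nabla P_1(z)\cdots\nabla P_{n-m}(z))$ has full rank $n-m$ at every $z\in Z$; it is a smooth $m$-dimensional submanifold with tangent spaces $T_zZ$. $N_\rho(E)$ is the $\rho$-neighbourhood of $E$, and $2B_r$ the ball concentric with $B_r$ of twice the radius. Fix a constant $c_{\mathrm{trans}}>0$ (depending only on $n$). A pair of linear subspaces $V_1,V_2$ of $\mathbb{R}^n$ with $\dim V_1+\dim V_2\ge n$ is quantitatively transverse if (i) $\dim(V_1\cap V_2)=\dim V_1+\dim V_2-n$ and (ii) $\angle(v_1,v_2)\ge c_{\mathrm{trans}}$ for all nonzero $v_j\in (V_1\cap V_2)^\perp\cap V_j$, $j=1,2$. *)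

theory Defs
  imports "HOL-Analysis.Analysis"
begin

definition grad :: "(real^'n \<Rightarrow> real) \<Rightarrow> real^'n \<Rightarrow> real^'n" where
  "grad f z = (\<chi> i. frechet_derivative f (at z) (axis i 1))"

definition zero_set :: "nat \<Rightarrow> (nat \<Rightarrow> real^'n \<Rightarrow> real) \<Rightarrow> (real^'n) set" where
  "zero_set k P = {x. \<forall>j<k. P j x = 0}"

definition transverse_complete_intersection ::
  "nat \<Rightarrow> (nat \<Rightarrow> real^'n \<Rightarrow> real) \<Rightarrow> bool" where
  "transverse_complete_intersection k P \<longleftrightarrow>
     (\<forall>j<k. real_polynomial_function (P j)) \<and>
     (\<forall>z\<in>zero_set k P. \<forall>a::nat \<Rightarrow> real.
        (\<Sum>j<k. a j *\<^sub>R grad (P j) z) = 0 \<longrightarrow> (\<forall>j<k. a j = 0))"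

definition tangent_space ::
  "nat \<Rightarrow> (nat \<Rightarrow> real^'n \<Rightarrow> real) \<Rightarrow> real^'n \<Rightarrow> (real^'n) set" where
  "tangent_space k P z = {v. \<forall>j<k. grad (P j) z \<bullet> v = 0}"

definition vec_angle :: "real^'n \<Rightarrow> real^'n \<Rightarrow> real" where
  "vec_angle u v = arccos ((u \<bullet> v) / (norm u * norm v))"

definition quant_transverse :: "real \<Rightarrow> (real^'n) set \<Rightarrow> (real^'n) set \<Rightarrow> bool" where
  "quant_transverse ctrans V1 V2 \<longleftrightarrow>
     int (dim (V1 \<inter> V2)) = int (dim V1) + int (dim V2) - int CARD('n) \<and>
     (\<forall>v1 v2. v1 \<in> orthogonal_comp (V1 \<inter> V2) \<inter> V1 \<and> v1 \<noteq> 0 \<and>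
              v2 \<in> orthogonal_comp (V1 \<inter> V2) \<inter> V2 \<and> v2 \<noteq> 0 \<longrightarrow>
              vec_angle v1 v2 \<ge> ctrans)"

definition nbhd :: "real \<Rightarrow> (real^'n) set \<Rightarrow> (real^'n) set" where
  "nbhd \<rho> E = {x. \<exists>e\<in>E. dist x e < \<rho>}"

end

theory Submission
  imports Defs
begin

lemma proj_exists:
  fixes S :: "'a::euclidean_space set"
  assumes "subspace S"
  obtains Pr where "linear Pr" "\<And>x. Pr x \<in> S" "\<And>x s. s \<in> S \<Longrightarrow> (x - Pr x) \<bullet> s = 0"
proof -
  obtain B where B: "B \<subseteq> S" "pairwise orthogonal B" "\<And>x. x\<in>B \<Longrightarrow> norm x = 1"
      "independent B" "span B = S"
    using orthonormal_basis_subspace[OF assms] by metis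
  have fin: "finite B" using independent_bound B(4) by blast
  define Pr where "Pr x = (\<Sum>b\<in>B. (b \<bullet> x) *\<^sub>R b)" for x
  have lin: "linear Pr"
    unfolding Pr_def by (rule linear_compose_sum) (simp add: linearI inner_add_right scaleR_add_left)
  have inS: "Pr x \<in> S" for x
  proof -
    have "Pr x \<in> span B" unfolding Pr_def by (intro span_sum span_scale span_base) 
    then show ?thesis using B(5) by simp
  qed
  have orthB: "(x - Pr x) \<bullet> b' = 0" if "b' \<in> B" for x b'
  proof -
    have "Pr x \<bullet> b' = (\<Sum>b\<in>B. (b \<bullet> x) * (b \<bullet> b'))"
      unfolding Pr_def by (simp add: inner_sum_left)
    also have "\<dots> = (\<Sum>b\<in>{b'}. (b \<bullet> x) * (b \<bullet> b'))"
    proof (rule sum.mono_neutral_right)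
      show "\<forall>i\<in>B - {b'}. i \<bullet> x * (i \<bullet> b') = 0"
        using that B(2) by (auto simp: pairwise_def orthogonal_def)
    qed (use fin that in auto)
    also have "\<dots> = b' \<bullet> x" using B(3)[OF that] by (simp add: dot_square_norm)
    finally have "Pr x \<bullet> b' = b' \<bullet> x" .
    then show ?thesis unfolding inner_diff_left by (simp add: inner_commute)
  qed
  have "(x - Pr x) \<bullet> s = 0" if "s \<in> S" for x s
  proof -
    have "s \<in> span B" using that B(5) by simp
    then have "orthogonal (x - Pr x) s"
      by (rule orthogonal_to_span) (simp add: orthogonal_def orthB)
    then show ?thesis by (simp add: orthogonal_def)
  qed
  then show ?thesis using that lin inS by blast
qed

lemma proj_props:
  fixes S :: "'a::euclidean_space set"
  assumes "subspace S" "linear Pr" "\<And>x. Pr x \<in> S" "\<And>x s. s \<in> S \<Longrightarrow> (x - Pr x) \<bullet> s = 0"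
  shows proj_id: "\<And>s. s \<in> S \<Longrightarrow> Pr s = s"
    and proj_perp: "\<And>y. (\<forall>s\<in>S. y \<bullet> s = 0) \<Longrightarrow> Pr y = 0"
    and proj_norm: "\<And>x. norm (x - Pr x) \<le> norm x"
proof -
  show id: "Pr s = s" if "s \<in> S" for s
  proof -
    have "s - Pr s \<in> S" using assms that by (simp add: subspace_diff)
    then have "(s - Pr s) \<bullet> (s - Pr s) = 0" using assms(4)[of "s - Pr s" s] by simp
    then show ?thesis by simp
  qed
  show "Pr y = 0" if "\<forall>s\<in>S. y \<bullet> s = 0" for y
  proof -
    have "Pr y \<bullet> Pr y = y \<bullet> Pr y - (y - Pr y) \<bullet> Pr y" by (simp add: inner_diff_left)
    also have "\<dots> = 0" using that assms(3)[of y] assms(4)[of "Pr y" y] by simp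
    finally show ?thesis by simp
  qed
  show "norm (x - Pr x) \<le> norm x" for x
  proof -
    have "(x - Pr x) \<bullet> Pr x = 0" using assms(3)[of x] assms(4)[of "Pr x" x] by simp
    then have "norm x ^ 2 = norm (x - Pr x) ^ 2 + norm (Pr x) ^ 2"
      using norm_add_Pythagorean[of "x - Pr x" "Pr x"] by (simp add: orthogonal_def)
    then have "norm (x - Pr x) ^ 2 \<le> norm x ^ 2" by simp
    then show ?thesis by (rule power2_le_imp_le) simp
  qed
qed
lemma linear_repr_inner:
  fixes f :: "'a::euclidean_space \<Rightarrow> real"
  assumes "linear f"
  shows "f v = (\<Sum>b\<in>Basis. f b *\<^sub>R b) \<bullet> v"
proof -
  have "f v = f (\<Sum>b\<in>Basis. (v \<bullet> b) *\<^sub>R b)" by (simp add: euclidean_representation)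
  also have "\<dots> = (\<Sum>b\<in>Basis. (v \<bullet> b) * f b)"
    using assms by (simp add: linear_sum linear_scale)
  also have "\<dots> = (\<Sum>b\<in>Basis. f b * (b \<bullet> v))"
    by (rule sum.cong) (auto simp: inner_commute)
  also have "\<dots> = (\<Sum>b\<in>Basis. f b *\<^sub>R b) \<bullet> v"
    by (simp add: inner_sum_left)
  finally show ?thesis .
qed

lemma grad_eq:
  assumes "(p has_derivative (\<lambda>v. G \<bullet> v)) (at x)"
  shows "grad p x = G"
proof -
  have "frechet_derivative p (at x) = (\<lambda>v. G \<bullet> v)" using frechet_derivative_at[OF assms] by simp
  then show ?thesis unfolding grad_def by (simp add: vec_eq_iff inner_axis)
qed
lemma poly_C1:
  fixes p :: "'a::euclidean_space \<Rightarrow> real"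
  assumes "real_polynomial_function p"
  shows "\<exists>G. continuous_on UNIV G \<and> (\<forall>x. (p has_derivative (\<lambda>v. G x \<bullet> v)) (at x))"
  using assms
proof (induction p rule: real_polynomial_function.induct)
  case (linear f)
  have "(f has_derivative (\<lambda>v. (\<Sum>b\<in>Basis. f b *\<^sub>R b) \<bullet> v)) (at x)" for x
  proof -
    have "f = (\<lambda>v. (\<Sum>b\<in>Basis. f b *\<^sub>R b) \<bullet> v)"
      using linear_repr_inner[of f] linear bounded_linear.linear by blast
    then show ?thesis using bounded_linear_imp_has_derivative[OF linear] by metis
  qed
  then show ?case by (intro exI[of _ "\<lambda>x. (\<Sum>b\<in>Basis. f b *\<^sub>R b)"] conjI continuous_on_const) auto
next
  case (const c)
  have "((\<lambda>x. c) has_derivative (\<lambda>v. 0 \<bullet> v)) (at x)" for x :: 'a by simp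
  then show ?case by (intro exI[of _ "\<lambda>x. 0"] conjI continuous_on_const) auto
next
  case (add f g)
  then obtain F G where F: "continuous_on UNIV F" "\<And>x. (f has_derivative (\<lambda>v. F x \<bullet> v)) (at x)"
    and G: "continuous_on UNIV G" "\<And>x. (g has_derivative (\<lambda>v. G x \<bullet> v)) (at x)" by blast
  have "((\<lambda>x. f x + g x) has_derivative (\<lambda>v. (F x + G x) \<bullet> v)) (at x)" for x
    by (rule has_derivative_eq_rhs[OF has_derivative_add[OF F(2) G(2)]]) (simp add: inner_add_left)
  moreover have "continuous_on UNIV (\<lambda>x. F x + G x)" using F(1) G(1) by (rule continuous_on_add)
  ultimately show ?case by blast
next
  case (mult f g)
  then obtain F G where F: "continuous_on UNIV F" "\<And>x. (f has_derivative (\<lambda>v. F x \<bullet> v)) (at x)"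
    and G: "continuous_on UNIV G" "\<And>x. (g has_derivative (\<lambda>v. G x \<bullet> v)) (at x)" by blast
  have cf: "continuous_on UNIV f"
    by (rule continuous_at_imp_continuous_on) (use F(2) has_derivative_continuous in blast)
  have cg: "continuous_on UNIV g"
    by (rule continuous_at_imp_continuous_on) (use G(2) has_derivative_continuous in blast)
  have "((\<lambda>x. f x * g x) has_derivative (\<lambda>v. (f x *\<^sub>R G x + g x *\<^sub>R F x) \<bullet> v)) (at x)" for x
    by (rule has_derivative_eq_rhs[OF has_derivative_mult[OF F(2) G(2)]]) (simp add: inner_add_left algebra_simps)
  moreover have "continuous_on UNIV (\<lambda>x. f x *\<^sub>R G x + g x *\<^sub>R F x)"
    using F(1) G(1) cf cg by (intro continuous_on_add continuous_on_scaleR)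
  ultimately show ?case by blast
qed
lemma transverse_solve:
  fixes T V :: "(real^'n) set"
  assumes T: "subspace T" and V: "subspace V" and qt: "quant_transverse ct T V" and ct: "ct > 0"
    and y: "\<forall>v\<in>V. y \<bullet> v = 0"
  shows "\<exists>u\<in>T. u + y \<in> V \<and> norm u ^ 2 * (1 - cos (min ct (pi/2)) ^ 2) \<le> norm y ^ 2"
proof -
  define s where "s = min ct (pi/2)"
  define cs where "cs = cos s"
  have s: "0 < s" "s \<le> pi/2" using ct by (auto simp: s_def)
  have cs0: "0 \<le> cs" unfolding cs_def using s by (intro cos_ge_zero) auto
  have cs1: "cs \<le> 1" unfolding cs_def by simp
  define W where "W = T \<inter> V"
  have W: "subspace W" unfolding W_def using T V by (rule subspace_inter)
  define TV where "TV = {x + y |x y. x \<in> T \<and> y \<in> V}"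
  have TVs: "subspace TV" unfolding TV_def using T V by (rule subspace_sums)
  have "dim TV + dim W = dim T + dim V" unfolding TV_def W_def using dim_sums_Int[OF T V] .
  moreover have "int (dim W) = int (dim T) + int (dim V) - int CARD('n)"
    using qt unfolding quant_transverse_def W_def by blast
  ultimately have "dim TV = DIM(real^'n)" by simp
  then have "span TV = UNIV" using dim_eq_full by blast
  then have "TV = UNIV" using TVs span_eq_iff by blast
  then obtain a b where ab: "a \<in> T" "b \<in> V" "- y = a + b" unfolding TV_def by blast
  obtain Pr where Pr: "linear Pr" "\<And>x. Pr x \<in> W" "\<And>x s. s \<in> W \<Longrightarrow> (x - Pr x) \<bullet> s = 0"
    using proj_exists[OF W] by blast
  define u where "u = a - Pr a"
  define v2 where "v2 = u + y"
  have uT: "u \<in> T" unfolding u_def using ab(1) Pr(2)[of a] T by (auto simp: W_def subspace_diff)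
  have yab: "y = -(a+b)" using ab(3) by (metis minus_minus)
  have "v2 = - (Pr a + b)" unfolding v2_def u_def yab by (simp add: algebra_simps)
  moreover have "Pr a + b \<in> V" using Pr(2)[of a] ab(2) V by (auto simp: W_def intro: subspace_add)
  ultimately have v2V: "v2 \<in> V" using V subspace_neg by metis
  have uW: "u \<bullet> w = 0" if "w \<in> W" for w unfolding u_def using Pr(3)[OF that] .
  have v2W: "v2 \<bullet> w = 0" if "w \<in> W" for w
    using uW[OF that] y that unfolding v2_def W_def by (auto simp: inner_add_left)
  have key: "norm u ^ 2 * (1 - cs ^ 2) \<le> norm y ^ 2"
  proof (cases "u = 0 \<or> v2 = 0")
    case True
    then show ?thesis
    proof
      assume "u = 0" then show ?thesis by simp
    next
      assume "v2 = 0"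
      then have "norm u = norm y" unfolding v2_def by (metis add_eq_0_iff norm_minus_cancel)
      moreover have "1 - cs ^ 2 \<le> 1" by simp
      ultimately show ?thesis by (simp add: mult_left_le)
    qed
  next
    case False
    then have u0: "u \<noteq> 0" and v0: "v2 \<noteq> 0" by auto
    have "u \<in> orthogonal_comp W \<inter> T" using uT uW by (auto simp: orthogonal_comp_def orthogonal_def inner_commute)
    moreover have "v2 \<in> orthogonal_comp W \<inter> V" using v2V v2W by (auto simp: orthogonal_comp_def orthogonal_def inner_commute)
    ultimately have ang: "vec_angle u v2 \<ge> ct"
      using qt u0 v0 unfolding quant_transverse_def W_def by blast
    define x where "x = (u \<bullet> v2) / (norm u * norm v2)"
    have nz: "norm u * norm v2 > 0" using u0 v0 by simp
    have "\<bar>u \<bullet> v2\<bar> \<le> norm u * norm v2" by (rule Cauchy_Schwarz_ineq2)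
    then have x1: "-1 \<le> x" "x \<le> 1" unfolding x_def using nz by (auto simp: divide_le_eq le_divide_eq abs_le_iff)
    have "s \<le> arccos x" using ang s_def unfolding vec_angle_def x_def by linarith
    then have "cos (arccos x) \<le> cos s" using s x1 by (intro cos_monotone_0_pi_le) (auto simp: arccos_ubound)
    then have "x \<le> cs" using x1 by (simp add: cos_arccos cs_def)
    then have uv: "u \<bullet> v2 \<le> cs * (norm u * norm v2)" unfolding x_def using nz by (simp add: divide_le_eq)
    have "norm y ^ 2 = norm (v2 - u) ^ 2" unfolding v2_def by simp
    also have "\<dots> = norm v2 ^ 2 - 2 * (u \<bullet> v2) + norm u ^ 2"
      by (simp add: power2_norm_eq_inner inner_diff_left inner_diff_right inner_commute)
    finally have "norm y ^ 2 \<ge> norm v2 ^ 2 - 2 * cs * (norm u * norm v2) + norm u ^ 2" using uv by linarith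
    moreover have "0 \<le> (norm v2 - cs * norm u) ^ 2" by simp
    ultimately show ?thesis by (simp add: power2_eq_square algebra_simps)
  qed
  show ?thesis using uT v2V key unfolding v2_def cs_def s_def by blast
qed
lemma curve_in_zero_set:
  fixes P :: "nat \<Rightarrow> real^'n \<Rightarrow> real" and w u :: "real^'n"
  assumes poly: "\<forall>j<k. real_polynomial_function (P j)"
    and w: "w \<in> zero_set k P"
    and indep: "\<forall>a::nat\<Rightarrow>real. (\<Sum>j<k. a j *\<^sub>R grad (P j) w) = 0 \<longrightarrow> (\<forall>j<k. a j = 0)"
    and u: "u \<in> tangent_space k P w"
    and e: "\<epsilon> > 0"
  shows "\<exists>\<delta>>0. \<forall>t. 0 < t \<and> t < \<delta> \<longrightarrow> (\<exists>x\<in>zero_set k P. norm (x - w - t *\<^sub>R u) \<le> \<epsilon> * t)"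
proof -
  have "\<forall>j. \<exists>G. j < k \<longrightarrow> continuous_on UNIV G \<and> (\<forall>x. (P j has_derivative (\<lambda>v. G x \<bullet> v)) (at x))"
    using poly poly_C1 by blast
  then obtain G where G: "\<And>j. j<k \<Longrightarrow> continuous_on UNIV (G j)"
      "\<And>j x. j<k \<Longrightarrow> (P j has_derivative (\<lambda>v. G j x \<bullet> v)) (at x)"
    by metis
  define g where "g j = G j w" for j
  have gg: "grad (P j) w = g j" if "j<k" for j using grad_eq[OF G(2)[OF that]] g_def by simp
  define T where "T = tangent_space k P w"
  have Tg: "T = {v. \<forall>j<k. g j \<bullet> v = 0}" unfolding T_def tangent_space_def using gg by auto
  have Ts: "subspace T" unfolding Tg subspace_def by (auto simp: inner_add_right)
  obtain L where L: "linear L" "\<And>x. L x \<in> T" "\<And>x s. s \<in> T \<Longrightarrow> (x - L x) \<bullet> s = 0"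
    using proj_exists[OF Ts] by blast
  have Lid: "L s = s" if "s\<in>T" for s using proj_id[OF Ts L that] .
  have bL: "bounded_linear L" using L(1) linear_conv_bounded_linear by blast
  define H where "H x = (\<Sum>j<k. P j x *\<^sub>R g j) + L (x - w)" for x
  define H' where "H' x v = (\<Sum>j<k. (G j x \<bullet> v) *\<^sub>R g j) + L v" for x v
  have derH: "(H has_derivative H' x) (at x)" for x
  proof -
    have "((\<lambda>x. \<Sum>j<k. P j x *\<^sub>R g j) has_derivative (\<lambda>v. \<Sum>j<k. (G j x \<bullet> v) *\<^sub>R g j)) (at x)"
      by (rule has_derivative_sum) (use G(2) in \<open>auto intro!: has_derivative_scaleR_left\<close>)
    moreover have "((\<lambda>x. L (x - w)) has_derivative L) (at x)"
      by (rule has_derivative_eq_rhs[OF bounded_linear.has_derivative[OF bL has_derivative_diff[OF has_derivative_ident has_derivative_const]]]) simp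
    ultimately show ?thesis unfolding H_def[abs_def] H'_def[abs_def] by (rule has_derivative_add)
  qed
  have Pw: "P j w = 0" if "j<k" for j using w that by (simp add: zero_set_def)
  have Hw: "H w = 0" unfolding H_def using Pw L(1) by (simp add: linear_0)
  have blH': "bounded_linear (H' w)" using derH[of w] has_derivative_bounded_linear by blast
  have H'w: "H' w v = (\<Sum>j<k. (g j \<bullet> v) *\<^sub>R g j) + L v" for v unfolding H'_def g_def by simp
  have inj0: "v = 0" if "H' w v = 0" for v
  proof -
    define A where "A = (\<Sum>j<k. (g j \<bullet> v) *\<^sub>R g j)"
    have AB: "A + L v = 0" using that H'w A_def by simp
    have "A \<bullet> L v = (\<Sum>j<k. (g j \<bullet> v) * (g j \<bullet> L v))" unfolding A_def by (simp add: inner_sum_left)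
    also have "\<dots> = 0" using L(2)[of v] unfolding Tg by simp
    finally have ALv: "A \<bullet> L v = 0" .
    have "A = - L v" using AB by (simp add: eq_neg_iff_add_eq_0)
    then have "A \<bullet> A = 0" using ALv by simp
    then have A0: "A = 0" by simp
    have "A \<bullet> v = (\<Sum>j<k. (g j \<bullet> v)^2)" unfolding A_def by (simp add: inner_sum_left power2_eq_square)
    then have "(\<Sum>j<k. (g j \<bullet> v)^2) = 0" using A0 by simp
    then have "\<forall>j\<in>{..<k}. (g j \<bullet> v)^2 = 0" by (subst sum_nonneg_eq_0_iff[symmetric]) auto
    then have "v \<in> T" unfolding Tg by simp
    then have "L v = v" by (rule Lid)
    moreover have "L v = 0" using AB A0 by simp
    ultimately show ?thesis by simp
  qed
  have linH': "linear (H' w)" using blH' bounded_linear.linear by blast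
  have "inj (H' w)" unfolding linear_inj_iff_eq_0[OF linH'] using inj0 by blast
  then obtain gi where gi: "linear gi" "gi \<circ> H' w = id" using linear_injective_left_inverse linH' by blast
  have gi2: "H' w \<circ> gi = id" using linear_inverse_left[OF linH' gi(1)] gi(2) by simp
  have blgi: "bounded_linear gi" using gi(1) linear_conv_bounded_linear by blast
  have onorm_small: "\<exists>d>0. \<forall>x. dist w x < d \<longrightarrow> onorm (\<lambda>v. H' x v - H' w v) < e" if epos: "e > 0" for e
  proof -
    define D where "D x = (\<Sum>j<k. norm (G j x - g j) * norm (g j))" for x
    have "continuous_on UNIV D" unfolding D_def
      using G(1) by (intro continuous_intros) auto
    then obtain d where d: "d > 0" "\<And>x. dist x w < d \<Longrightarrow> dist (D x) (D w) < e"
      using epos unfolding continuous_on_iff by (meson UNIV_I)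
    have Dw: "D w = 0" unfolding D_def g_def by simp
    have "onorm (\<lambda>v. H' x v - H' w v) < e" if "dist w x < d" for x
    proof -
      have "onorm (\<lambda>v. H' x v - H' w v) \<le> D x"
      proof (rule onorm_le)
        fix v
        have eqH: "H' x v - H' w v = (\<Sum>j<k. ((G j x - g j) \<bullet> v) *\<^sub>R g j)"
          unfolding H'_def g_def by (simp add: inner_diff_left scaleR_diff_left sum_subtractf)
        have "norm (H' x v - H' w v) \<le> (\<Sum>j<k. norm (((G j x - g j) \<bullet> v) *\<^sub>R g j))"
          unfolding eqH by (rule norm_sum)
        also have "\<dots> \<le> (\<Sum>j<k. norm (G j x - g j) * norm (g j) * norm v)"
        proof (rule sum_mono)
          fix j
          have CS: "\<bar>(G j x - g j) \<bullet> v\<bar> \<le> norm (G j x - g j) * norm v" by (rule Cauchy_Schwarz_ineq2)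
          have "norm (((G j x - g j) \<bullet> v) *\<^sub>R g j) = \<bar>(G j x - g j) \<bullet> v\<bar> * norm (g j)" by (rule norm_scaleR)
          also have "\<dots> \<le> (norm (G j x - g j) * norm v) * norm (g j)" by (rule mult_right_mono[OF CS norm_ge_zero])
          finally show "norm (((G j x - g j) \<bullet> v) *\<^sub>R g j) \<le> norm (G j x - g j) * norm (g j) * norm v"
            by (simp add: ac_simps)
        qed
        also have "\<dots> = D x * norm v" unfolding D_def by (simp add: sum_distrib_right)
        finally show "norm (H' x v - H' w v) \<le> D x * norm v" .
      qed
      also have "D x < e" using d(2)[of x] that Dw by (simp add: dist_commute dist_real_def)
      finally show ?thesis .
    qed
    then show ?thesis using d(1) by blast
  qed
  obtain r where r: "r > 0" "inj_on H (ball w r)"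
    using has_derivative_locally_injective[of w UNIV gi H', OF _ _ blgi gi(2) derH onorm_small] by auto
  have contH: "continuous_on UNIV H"
    using derH has_derivative_continuous continuous_at_imp_continuous_on by blast
  have "H w \<in> interior (H ` ball w r)"
    using sussmann_open_mapping[OF open_UNIV contH _ derH blgi gi2, of "ball w r"] r(1) by simp
  then obtain \<delta>0 where \<delta>0: "\<delta>0 > 0" "ball 0 \<delta>0 \<subseteq> H ` ball w r"
    using Hw mem_interior by metis
  define ginv where "ginv = inv_into (ball w r) H"
  have ginvH: "ginv (H x) = x" if "x \<in> ball w r" for x
    unfolding ginv_def using inv_into_f_f[OF r(2) that] .
  have dginv: "(ginv has_derivative gi) (at (H w))"
    by (rule has_derivative_inverse_strong[OF open_ball _ continuous_on_subset[OF contH] ginvH derH gi2])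
       (use r(1) in auto)
  then have dginv0: "(ginv has_derivative gi) (at 0)" using Hw by simp
  have gw: "ginv 0 = w" using ginvH[of w] Hw r(1) by simp
  define M where "M = norm (L u) + 1"
  have M: "M > 0" "norm (L u) \<le> M" unfolding M_def by (simp add: add_nonneg_pos)+
  obtain d where d: "d > 0" "\<And>y. norm (y - 0) < d \<Longrightarrow> norm (ginv y - ginv 0 - gi (y - 0)) \<le> (\<epsilon> / M) * norm (y - 0)"
    using dginv0 e M(1) unfolding has_derivative_at_alt by (meson divide_pos_pos)
  have uT: "u \<in> T" using u T_def by simp
  have H'u: "H' w u = L u" using uT unfolding H'w Tg by simp
  have giLu: "gi (L u) = u" using gi(2) H'u by (metis comp_apply id_apply)
  define \<delta> where "\<delta> = min d \<delta>0 / M"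
  have "\<delta> > 0" unfolding \<delta>_def using d(1) \<delta>0(1) M(1) by simp
  moreover have "\<exists>x\<in>zero_set k P. norm (x - w - t *\<^sub>R u) \<le> \<epsilon> * t" if t: "0 < t" "t < \<delta>" for t
  proof -
    define y where "y = t *\<^sub>R L u"
    have "norm y \<le> t * M" unfolding y_def using t M by (simp add: mult_left_mono)
    also have "\<dots> < min d \<delta>0" using t M(1) unfolding \<delta>_def by (simp add: less_divide_eq)
    finally have ny: "norm y < min d \<delta>0" .
    then have "y \<in> H ` ball w r" using \<delta>0(2) by auto
    then obtain x where x: "x \<in> ball w r" "H x = y" by auto
    have gy: "ginv y = x" using ginvH[OF x(1)] x(2) by simp
    have giy: "gi y = t *\<^sub>R u" unfolding y_def using giLu gi(1) by (simp add: linear_scale)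
    have "norm (x - w - t *\<^sub>R u) \<le> (\<epsilon> / M) * norm y" using d(2)[of y] ny gy gw giy by simp
    also have "\<dots> \<le> (\<epsilon> / M) * (t * M)"
      using e M(1) \<open>norm y \<le> t * M\<close> by (intro mult_left_mono) auto
    also have "\<dots> = \<epsilon> * t" using M(1) by simp
    finally have close: "norm (x - w - t *\<^sub>R u) \<le> \<epsilon> * t" .
    define A where "A = (\<Sum>j<k. P j x *\<^sub>R g j)"
    have "A = y - L (x - w)" using x(2) unfolding H_def A_def by (simp add: algebra_simps)
    moreover have "y \<in> T" unfolding y_def using L(2) Ts by (simp add: subspace_scale)
    ultimately have AT: "A \<in> T" using L(2) Ts by (simp add: subspace_diff)
    have "A \<bullet> A = (\<Sum>j<k. P j x * (g j \<bullet> A))" unfolding A_def[of] by (simp add: inner_sum_left)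
    also have "\<dots> = 0" using AT unfolding Tg by simp
    finally have "A = 0" by simp
    then have "(\<Sum>j<k. P j x *\<^sub>R grad (P j) w) = 0" unfolding A_def using gg by simp
    then have "\<forall>j<k. P j x = 0" using spec[OF indep, of "\<lambda>j. P j x"] by simp
    then have "x \<in> zero_set k P" by (simp add: zero_set_def)
    then show ?thesis using close by blast
  qed
  ultimately show ?thesis by blast
qed
lemma tangent_subspace: "subspace (tangent_space k P w)"
  unfolding tangent_space_def subspace_def by (auto simp: inner_add_right)

lemma poly_cont:
  fixes p :: "'a::euclidean_space \<Rightarrow> real"
  assumes "real_polynomial_function p"
  shows "continuous_on UNIV p"
proof -
  obtain G where "\<forall>x. (p has_derivative (\<lambda>v. G x \<bullet> v)) (at x)" using poly_C1[OF assms] by blast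
  then show ?thesis using has_derivative_continuous continuous_at_imp_continuous_on by blast
qed

lemma main_step:
  fixes P :: "nat \<Rightarrow> real^'n \<Rightarrow> real" and x0 p z :: "real^'n"
  assumes ct: "ctrans > 0" and d_def: "d = 1 - cos (min ctrans (pi/2)) ^ 2" and d: "0 < d"
    and K: "K = 2 / sqrt d" "K \<ge> 2"
    and r: "r > 0" and V: "subspace V"
    and tci: "transverse_complete_intersection k P"
    and qt: "\<forall>z \<in> zero_set k P \<inter> ball x0 (2*r). quant_transverse ctrans (tangent_space k P z) V"
    and \<rho>: "0 < \<rho>" "\<rho> \<le> 1/(K+1) * r"
    and p: "p \<in> V" "dist x0 p < r"
    and z: "z \<in> zero_set k P" "dist p z < \<rho>"
  shows "\<exists>e\<in>V \<inter> zero_set k P. dist p e < (K+1) * \<rho>"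
proof -
  obtain Q where Q: "linear Q" "\<And>x. Q x \<in> V" "\<And>x s. s \<in> V \<Longrightarrow> (x - Q x) \<bullet> s = 0"
    using proj_exists[OF V] by blast
  have Prid: "Q s = s" if "s \<in> V" for s using proj_id[of V Q s] V Q that by blast
  have Prperp: "Q y = 0" if "\<forall>s\<in>V. y \<bullet> s = 0" for y using proj_perp[of V Q y] V Q that by blast
  have Prnorm: "norm (x - Q x) \<le> norm x" for x using proj_norm[of V Q x] V Q by blast
  have poly: "\<forall>j<k. real_polynomial_function (P j)" using tci unfolding transverse_complete_intersection_def by blast
  have indep: "\<And>w. w \<in> zero_set k P \<Longrightarrow> \<forall>a::nat\<Rightarrow>real. (\<Sum>j<k. a j *\<^sub>R grad (P j) w) = 0 \<longrightarrow> (\<forall>j<k. a j = 0)"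
    using tci unfolding transverse_complete_intersection_def by blast
  define Z where "Z = zero_set k P"
  have "Z = (\<Inter>j\<in>{..<k}. {x. P j x = 0})" unfolding Z_def zero_set_def by auto
  moreover have "closed {x. P j x = 0}" if "j \<in> {..<k}" for j
    using poly that poly_cont by (intro closed_Collect_eq continuous_on_const) auto
  ultimately have Zc: "closed Z" by (simp add: closed_INT)
  have Kpos: "K > 0" using K by linarith
  define R where "R = K * \<rho>"
  define S0 where "S0 = Z \<inter> cball z R"
  have S0c: "compact S0" unfolding S0_def using Zc by (intro closed_Int_compact) auto
  have zS0: "z \<in> S0" unfolding S0_def R_def using z Kpos \<rho> Z_def by auto
  define \<phi> where "\<phi> x = norm (x - Q x) + dist x z / K" for x
  have blPr: "bounded_linear Q" using Q(1) linear_conv_bounded_linear by blast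
  have "continuous_on S0 \<phi>" unfolding \<phi>_def
    using Kpos by (intro continuous_intros linear_continuous_on blPr) auto
  then obtain w where w: "w \<in> S0" "\<And>x. x \<in> S0 \<Longrightarrow> \<phi> w \<le> \<phi> x"
    using continuous_attains_inf[OF S0c _] zS0 by blast
  have wZ: "w \<in> Z" using w(1) S0_def by simp
  have "z - Q z = (z - p) - Q (z - p)" using Prid[OF p(1)] Q(1) by (simp add: linear_diff)
  then have "norm (z - Q z) \<le> norm (z - p)" using Prnorm[of "z - p"] by metis
  then have "\<phi> z < \<rho>" unfolding \<phi>_def using z(2) by (simp add: dist_norm norm_minus_commute)
  then have "\<phi> w < \<rho>" using w(2)[OF zS0] by simp
  then have "dist w z / K < \<rho>" unfolding \<phi>_def by (smt (verit) norm_ge_zero)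
  then have dwz: "dist w z < R" unfolding R_def using Kpos by (simp add: divide_less_eq mult.commute)
  have wV: "w - Q w = 0"
  proof (rule ccontr)
    assume y0: "w - Q w \<noteq> 0"
    define y where "y = w - Q w"
    define ny where "ny = norm y"
    have ny: "ny > 0" using y0 unfolding ny_def y_def by simp
    have yperp: "\<forall>s\<in>V. y \<bullet> s = 0" unfolding y_def using Q(3) by blast
    have "dist x0 w \<le> dist x0 p + dist p z + dist z w" using dist_triangle[of x0 w p] dist_triangle[of p w z] by linarith
    also have "\<dots> < r + \<rho> + R" using p(2) z(2) dwz by (simp add: dist_commute)
    also have "\<dots> = r + (K + 1) * \<rho>" unfolding R_def by (simp add: algebra_simps)
    also have "\<dots> \<le> 2 * r" using \<rho>(2) Kpos by (simp add: field_simps)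
    finally have "w \<in> ball x0 (2*r)" by simp
    then have "quant_transverse ctrans (tangent_space k P w) V" using qt wZ Z_def by blast
    then obtain u where u: "u \<in> tangent_space k P w" "u + y \<in> V" "norm u ^ 2 * d \<le> ny ^ 2"
      using transverse_solve[OF tangent_subspace V _ ct yperp] d_def ny_def by blast
    have "sqrt (norm u ^ 2 * d) \<le> sqrt (ny ^ 2)" using u(3) by (rule real_sqrt_le_mono)
    then have "norm u * sqrt d \<le> ny" using ny by (simp add: real_sqrt_mult)
    then have "norm u * sqrt d * K \<le> ny * K" using Kpos by (simp add: mult_right_mono)
    moreover have "sqrt d * K = 2" using K(1) d by simp
    ultimately have nu: "norm u \<le> ny * K / 2" by (simp add: mult.assoc)
    define \<epsilon> where "\<epsilon> = ny / 8"
    obtain \<delta> where \<delta>: "\<delta> > 0" "\<And>t. 0 < t \<and> t < \<delta> \<Longrightarrow> (\<exists>x\<in>zero_set k P. norm (x - w - t *\<^sub>R u) \<le> \<epsilon> * t)"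
      using curve_in_zero_set[OF poly _ indep u(1), of \<epsilon>] wZ Z_def ny \<epsilon>_def by auto
    define gap where "gap = R - dist w z"
    have gap: "gap > 0" using dwz gap_def by simp
    define M where "M = norm u + ny + 1"
    have M: "M > 0" unfolding M_def using ny by (simp add: add_nonneg_pos)
    define t where "t = min (\<delta>/2) (min (1/2) (gap / M))"
    have t1: "t \<le> \<delta>/2" "t \<le> 1/2" "t \<le> gap/M" unfolding t_def
      by (rule min.cobounded1, rule min.coboundedI2, rule min.cobounded1, rule min.coboundedI2, rule min.cobounded2)
    have t0: "0 < t" unfolding t_def using \<delta>(1) gap M by simp
    have "t * M \<le> gap" using t1(3) M by (simp add: le_divide_eq)
    then have t: "0 < t" "t < \<delta>" "t \<le> 1/2" "t * M \<le> gap" using t0 t1 \<delta>(1) by auto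
    obtain x where x: "x \<in> zero_set k P" "norm (x - w - t *\<^sub>R u) \<le> \<epsilon> * t" using \<delta>(2) t by blast
    define e where "e = x - w - t *\<^sub>R u"
    have xe: "x = w + t *\<^sub>R u + e" unfolding e_def by simp
    have ne: "norm e \<le> \<epsilon> * t" using x(2) e_def by simp
    have xz: "x - z = (w - z) + (t *\<^sub>R u + e)" unfolding xe by simp
    have "norm (x - z) \<le> norm (w - z) + norm (t *\<^sub>R u + e)" unfolding xz by (rule norm_triangle_ineq)
    also have "\<dots> \<le> norm (w - z) + (norm (t *\<^sub>R u) + norm e)" using norm_triangle_ineq[of "t *\<^sub>R u" e] by simp
    finally have "dist x z \<le> dist w z + norm (t *\<^sub>R u) + norm e" by (simp add: dist_norm)
    also have "\<dots> \<le> dist w z + t * M"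
    proof -
      have nt: "0 < ny * t" using ny t(1) by simp
      have "\<epsilon> * t = (ny * t) / 8" by (simp add: \<epsilon>_def)
      then have "norm e \<le> ny * t + t" using ne nt t(1) by linarith
      moreover have "norm (t *\<^sub>R u) = t * norm u" using t(1) by simp
      moreover have "t * M = t * norm u + ny * t + t" unfolding M_def by (simp add: algebra_simps)
      ultimately show ?thesis by linarith
    qed
    also have "\<dots> \<le> R" using t(4) gap_def by simp
    finally have xS0: "x \<in> S0" unfolding S0_def using x(1) Z_def by (simp add: dist_commute)
    have Pu: "u - Q u = - y"
    proof -
      have "Q (u + y) = u + y" using Prid u(2) by blast
      moreover have "Q y = 0" using Prperp yperp by blast
      ultimately have "Q u = u + y" using Q(1) by (simp add: linear_add)
      then show ?thesis by simp
    qed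
    have "x - Q x = (w - Q w) + t *\<^sub>R (u - Q u) + (e - Q e)"
      unfolding xe using Q(1) by (simp add: linear_add linear_scale algebra_simps)
    also have "\<dots> = (1 - t) *\<^sub>R y + (e - Q e)" unfolding Pu y_def by (simp add: algebra_simps)
    finally have xQ: "x - Q x = (1 - t) *\<^sub>R y + (e - Q e)" .
    have "norm (x - Q x) \<le> norm ((1 - t) *\<^sub>R y) + norm (e - Q e)" unfolding xQ by (rule norm_triangle_ineq)
    moreover have "norm ((1 - t) *\<^sub>R y) = (1 - t) * ny" using t(3) ny_def by simp
    moreover have "norm (e - Q e) \<le> \<epsilon> * t" using Prnorm[of e] ne by simp
    ultimately have nx: "norm (x - Q x) \<le> (1 - t) * ny + \<epsilon> * t" by simp
    have dx: "dist x z \<le> dist w z + t * norm u + \<epsilon> * t"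
      using \<open>dist x z \<le> dist w z + norm (t *\<^sub>R u) + norm e\<close> ne t(1) by simp
    have "\<phi> x \<le> (1 - t) * ny + \<epsilon> * t + (dist w z + t * norm u + \<epsilon> * t) / K"
      unfolding \<phi>_def using nx dx Kpos by (simp add: divide_right_mono add_mono)
    also have "\<dots> = \<phi> w - t * ny + \<epsilon> * t + t * (norm u / K) + \<epsilon> * t / K"
      unfolding \<phi>_def y_def[symmetric] ny_def[symmetric] using Kpos by (simp add: field_simps)
    also have "\<dots> < \<phi> w"
    proof -
      have "norm u / K \<le> ny / 2" using nu Kpos by (simp add: divide_le_eq)
      then have a: "t * (norm u / K) \<le> t * (ny / 2)" by (rule mult_left_mono) (use t(1) in simp)
      have "\<epsilon> * t / K \<le> \<epsilon> * t / 2" using K(2) \<epsilon>_def ny t(1) by (intro divide_left_mono) auto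
      moreover have "\<epsilon> * t = (t * ny) / 8" "\<epsilon> * t / 2 = (t * ny) / 16" "t * (ny / 2) = (t * ny) / 2"
        unfolding \<epsilon>_def by simp_all
      moreover have "t * ny > 0" using t(1) ny by simp
      ultimately show ?thesis using a by (simp only: mult.commute[of t ny])
    qed
    finally show False using w(2)[OF xS0] by simp
  qed
  then have "w \<in> V" using Q(2)[of w] by simp
  moreover have "dist p w < (K+1) * \<rho>"
  proof -
    have "dist p w \<le> dist p z + dist z w" by (rule dist_triangle)
    also have "\<dots> < \<rho> + R" using z(2) dwz by (simp add: dist_commute)
    finally show ?thesis unfolding R_def by (simp add: algebra_simps)
  qed
  ultimately show ?thesis using wZ Z_def by blast
qed
theorem lemma8p8:
  fixes ctrans :: real
  assumes "ctrans > 0"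
  shows "\<exists>C>0. \<exists>c>0. \<forall>(x0::real^'n) r (V::(real^'n) set) m (P::nat \<Rightarrow> real^'n \<Rightarrow> real) \<rho>.
     r > 0 \<longrightarrow> subspace V \<longrightarrow> m \<le> CARD('n) \<longrightarrow>
     transverse_complete_intersection (CARD('n) - m) P \<longrightarrow>
     m + dim V \<ge> CARD('n) \<longrightarrow>
     (\<forall>z \<in> zero_set (CARD('n) - m) P \<inter> ball x0 (2 * r).
        quant_transverse ctrans (tangent_space (CARD('n) - m) P z) V) \<longrightarrow>
     0 < \<rho> \<longrightarrow> \<rho> \<le> c * r \<longrightarrow>
     V \<inter> ball x0 r \<inter> nbhd \<rho> (zero_set (CARD('n) - m) P)
       \<subseteq> nbhd (C * \<rho>) (V \<inter> zero_set (CARD('n) - m) P)"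
proof -
  define s where "s = min ctrans (pi/2)"
  define d where "d = 1 - cos s ^ 2"
  have s: "0 < s" "s \<le> pi/2" using assms by (auto simp: s_def)
  have "cos s < cos 0" using s pi_gt_zero by (intro cos_monotone_0_pi) linarith+
  then have c1: "cos s < 1" by simp
  have c0: "0 \<le> cos s" using s by (intro cos_ge_zero) auto
  have "cos s ^ 2 < 1" using c0 c1 by (simp add: power_less_one_iff abs_less_iff)
  then have d: "0 < d" "d \<le> 1" unfolding d_def by auto
  define K where "K = 2 / sqrt d"
  have "sqrt d \<le> 1" "sqrt d > 0" using d by auto
  then have K2: "K \<ge> 2" unfolding K_def by (simp add: le_divide_eq)
  have main: "\<forall>(x0::real^'n) r (V::(real^'n) set) m (P::nat \<Rightarrow> real^'n \<Rightarrow> real) \<rho>.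
     r > 0 \<longrightarrow> subspace V \<longrightarrow> m \<le> CARD('n) \<longrightarrow>
     transverse_complete_intersection (CARD('n) - m) P \<longrightarrow>
     m + dim V \<ge> CARD('n) \<longrightarrow>
     (\<forall>z \<in> zero_set (CARD('n) - m) P \<inter> ball x0 (2 * r).
        quant_transverse ctrans (tangent_space (CARD('n) - m) P z) V) \<longrightarrow>
     0 < \<rho> \<longrightarrow> \<rho> \<le> 1/(K+1) * r \<longrightarrow>
     V \<inter> ball x0 r \<inter> nbhd \<rho> (zero_set (CARD('n) - m) P)
       \<subseteq> nbhd ((K+1) * \<rho>) (V \<inter> zero_set (CARD('n) - m) P)"
  proof (intro allI impI subsetI)
    fix x0 :: "real^'n" and r V m and P :: "nat \<Rightarrow> real^'n \<Rightarrow> real" and \<rho> p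
    assume r: "r > 0" and V: "subspace V" and tci: "transverse_complete_intersection (CARD('n) - m) P"
      and qt: "\<forall>z \<in> zero_set (CARD('n) - m) P \<inter> ball x0 (2 * r).
        quant_transverse ctrans (tangent_space (CARD('n) - m) P z) V"
      and \<rho>: "0 < \<rho>" "\<rho> \<le> 1/(K+1) * r"
      and p: "p \<in> V \<inter> ball x0 r \<inter> nbhd \<rho> (zero_set (CARD('n) - m) P)"
    obtain z where z: "z \<in> zero_set (CARD('n) - m) P" "dist p z < \<rho>" using p unfolding nbhd_def by blast
    have "\<exists>e\<in>V \<inter> zero_set (CARD('n) - m) P. dist p e < (K+1) * \<rho>"
      by (rule main_step[OF assms d_def[unfolded s_def] d(1) K_def K2 r V tci qt \<rho> _ _ z]) (use p in auto)
    then show "p \<in> nbhd ((K+1) * \<rho>) (V \<inter> zero_set (CARD('n) - m) P)" unfolding nbhd_def by blast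
  qed
  have "K + 1 > 0" "1/(K+1) > 0" using K2 by auto
  then show ?thesis using main by blast
qed

end
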